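(* Let $D$ be a distribution over $\mathcal{X}\times\mathcal{Y}$ ($\mathcal{X}\subset\mathbb{R}^d$, $\mathcal{Y}=\{1,\dots,c\}$) that is $(k_1,\dots,k_n)$-separable with $\delta$-margin, and let $f:\mathcal{Y}\to\mathbb{R}^m$ be injective, regarding $f(y)$ as the desired output for an input $x$ with label $y$. Let $K=\prod_{s=1}^n k_s$. Then for every $\epsilon>0$ there exists a 4-layer network $g:\mathcal{X}\to\mathbb{R}^m$ of the form $$p^s(x)=\sum_{l=1}^{k_s} v_{s,l}\,\rho(u_s^Tx-\beta_{s,l})\ (s=1,\dots,n),\qquad p(x)=(p^1(x),\dots,p^n(x))^T,$$ $$g(x)=W^T\big(\rho(u^Tp(x)-\gamma_1),\dots,\rho(u^Tp(x)-\gamma_K)\big)^T,$$ with $u_s\in\mathbb{R}^d$, $\beta_{s,l},v_{s,l}\in\mathbb{R}$, $u\in\mathbb{R}^n$, $\gamma_1,\dots,\gamma_K\in\mathbb{R}$, $W\in\mathbb{R}^{K\times m}$ — thus with $n(d+1)+2\sum_{s=1}^n k_s+(m+1)\prod_{s=1}^n k_s$ parameters — such that $$\mathbb{P}_{(x,y)\sim D}\Big(\max_{1\le j\le m}|g_j(x)-f_j(y)|>\epsilon\Big)=0,$$ where $g_j,f_j$ denote $j$-th components.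
   Context: $\rho(t)=1/(1+e^{-t})$ is the sigmoid function. Definition ($(k_1,\dots,k_n)$-separable with $\delta$-margin): Let $\mathcal{X}\subset\mathbb{R}^d$, $\mathcal{Y}=\{1,\dots,c\}$. A distribution $D$ over $\mathcal{X}\times\mathcal{Y}$ is $(k_1,\dots,k_n)$-separable with $\delta$-margin ($\delta>0$) if there exist $a_1,\dots,a_n\in\mathbb{R}^d$ with $\|a_s\|_2=1$ and constants $b_{s,1}<b_{s,2}<\cdots<b_{s,k_s+1}$ for each $s\in\{1,\dots,n\}$ such that, for each multi-index $\mathbf{i}=(i_1,\dots,i_n)$ with $i_s\in\{1,\dots,k_s\}$ and $\mathcal{X}_{\mathbf{i}}=\{x\in\mathcal{X}: b_{s,i_s}+\delta<a_s^Tx<b_{s,i_s+1}-\delta \text{ for all } 1\le s\le n\}$: (i) there is $y_{\mathbf{i}}\in\mathcal{Y}$ with $\mathbb{P}_{(x,y)\sim D}(y=y_{\mathbf{i}}\mid x\in\mathcal{X}_{\mathbf{i}})=1$; (ii) $\mathbb{P}_{(x,y)\sim D}\big(x\in\bigcup_{\mathbf{i}}\mathcal{X}_{\mathbf{i}}\big)=1$. *)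

theory Defs
  imports "HOL-Probability.Probability"
begin

definition sigmoid :: "real \<Rightarrow> real" where
  "sigmoid t = 1 / (1 + exp (- t))"

definition cell ::
  "(real ^ ('d::finite)) set \<Rightarrow> nat \<Rightarrow> (nat \<Rightarrow> real ^ 'd) \<Rightarrow> (nat \<Rightarrow> nat \<Rightarrow> real) \<Rightarrow> real
    \<Rightarrow> (nat \<Rightarrow> nat) \<Rightarrow> (real ^ 'd) set" where
  "cell X n a b \<delta> i = {x \<in> X. \<forall>s\<in>{1..n}.
       b s (i s) + \<delta> < a s \<bullet> x \<and> a s \<bullet> x < b s (i s + 1) - \<delta>}"

definition multi_index :: "nat \<Rightarrow> (nat \<Rightarrow> nat) \<Rightarrow> (nat \<Rightarrow> nat) \<Rightarrow> bool" where
  "multi_index n k i \<longleftrightarrow> (\<forall>s\<in>{1..n}. i s \<in> {1..k s})"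

text \<open>D is a distribution over X \<times> {1..c} that is (k_1,...,k_n)-separable with delta-margin.
  Conditional probability one is rendered as "almost surely, x in the cell implies y = y_i".\<close>
definition separable ::
  "((real ^ ('d::finite)) \<times> nat) measure \<Rightarrow> (real ^ 'd) set \<Rightarrow> nat \<Rightarrow> nat \<Rightarrow> (nat \<Rightarrow> nat) \<Rightarrow> real \<Rightarrow> bool" where
  "separable D X c n k \<delta> \<longleftrightarrow> \<delta> > 0 \<and>
     (\<exists>a b. (\<forall>s\<in>{1..n}. norm (a s) = 1) \<and>
       (\<forall>s\<in>{1..n}. \<forall>j\<in>{1..k s}. b s j < b s (j + 1)) \<and>
       (\<forall>i. multi_index n k i \<longrightarrow>
          (\<exists>yi\<in>{1..c}. AE z in D. fst z \<in> cell X n a b \<delta> i \<longrightarrow> snd z = yi)) \<and>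
       (AE z in D. \<exists>i. multi_index n k i \<and> fst z \<in> cell X n a b \<delta> i))"

text \<open>The 4-layer network.  U s = u_s, beta s l, v s l, u s (s = 1..n), gamma t and
  row W t of W (t = 1..K).\<close>
definition net ::
  "nat \<Rightarrow> (nat \<Rightarrow> nat) \<Rightarrow> (nat \<Rightarrow> real ^ ('d::finite)) \<Rightarrow> (nat \<Rightarrow> nat \<Rightarrow> real) \<Rightarrow> (nat \<Rightarrow> nat \<Rightarrow> real)
    \<Rightarrow> (nat \<Rightarrow> real) \<Rightarrow> (nat \<Rightarrow> real) \<Rightarrow> (nat \<Rightarrow> real ^ ('m::finite)) \<Rightarrow> real ^ 'd \<Rightarrow> real ^ 'm" where
  "net n k U \<beta> v u \<gamma> W x =
     (let p = (\<lambda>s. \<Sum>l=1..k s. v s l * sigmoid (U s \<bullet> x - \<beta> s l));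
          q = (\<Sum>s=1..n. u s * p s)
      in \<Sum>t=1..(\<Prod>s=1..n. k s). sigmoid (q - \<gamma> t) *\<^sub>R W t)"

end

theory Submission imports Defs begin

lemma sig_low: assumes "T > 0" "t \<le> - T" shows "\<bar>sigmoid t\<bar> \<le> 1 / T"
proof -
  have "exp (-t) \<ge> 1 + (-t)" by (rule exp_ge_add_one_self)
  hence e: "1 + exp (-t) \<ge> T" using assms by linarith
  have p: "1 + exp (-t) > 0" by (smt (verit) exp_gt_zero)
  have "sigmoid t = 1 / (1 + exp (-t))" by (simp add: sigmoid_def)
  also have "\<dots> \<le> 1 / T" using e assms by (intro divide_left_mono) auto
  finally show ?thesis using p by (simp add: sigmoid_def)
qed

lemma sig_neg: "sigmoid (-t) = 1 - sigmoid t"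
proof -
  have p: "1 + exp (-t) > 0" "1 + exp t > 0" by (smt (verit) exp_gt_zero)+
  have "exp t * exp (-t) = 1" by (simp add: exp_minus_inverse)
  then show ?thesis using p unfolding sigmoid_def by (simp add: field_simps)
qed

lemma sig_high: assumes "T > 0" "t \<ge> T" shows "\<bar>sigmoid t - 1\<bar> \<le> 1 / T"
  using sig_low[of T "-t"] assms sig_neg[of t] by auto

lemma b_mono: fixes b :: "nat \<Rightarrow> real" and k l j :: nat assumes "\<forall>j\<in>{1..k}. b j < (b (j + 1)::real)" "1 \<le> l" "l \<le> j" "j \<le> k + 1"
  shows "b l \<le> b j"
  using assms(3,4)
proof (induction j rule: dec_induct)
  case base then show ?case by simp
next
  case (step j)
  then have "b j < b (j+1)" using assms(1,2) by auto
  then show ?case using step by auto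
qed

lemma layer1:
  fixes b :: "nat \<Rightarrow> real"
  assumes mono: "\<forall>j\<in>{1..k}. b j < b (j + 1)" and i: "1 \<le> i" "i \<le> k"
    and y: "b i + \<delta> < y" "y < b (i+1) - \<delta>" and M: "M > 0" and d: "\<delta> > 0"
  shows "\<bar>(\<Sum>l=1..k. sigmoid (M * y - M * b l)) - real i\<bar> \<le> real k / (M * \<delta>)"
proof -
  have Md: "M * \<delta> > 0" using M d by simp
  have ri: "real i = (\<Sum>l=1..k. (if l \<le> i then 1 else 0::real))"
  proof -
    have "(\<Sum>l=1..k. (if l \<le> i then 1 else 0::real)) = (\<Sum>l\<in>{1..k} \<inter> {l. l \<le> i}. 1)"
      using sum.inter_restrict[of "{1..k}" "\<lambda>_. 1::real" "{l. l \<le> i}"] by simp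
    also have "{1..k} \<inter> {l. l \<le> i} = {1..i}" using i by auto
    finally show ?thesis by simp
  qed
  have tm: "\<bar>sigmoid (M * y - M * b l) - (if l \<le> i then 1 else 0)\<bar> \<le> 1 / (M * \<delta>)"
    if l: "l \<in> {1..k}" for l
  proof (cases "l \<le> i")
    case True
    then have "b l \<le> b i" using b_mono[OF mono, of l i] l i by auto
    then have "M * y - M * b l \<ge> M * \<delta>" using y M
      by (smt (verit, ccfv_SIG) mult_left_mono right_diff_distrib)
    then show ?thesis using sig_high[OF Md] True by auto
  next
    case False
    then have "b (i+1) \<le> b l" using b_mono[OF mono, of "i+1" l] l i by auto
    then have "M * y - M * b l \<le> - (M * \<delta>)" using y M
      by (smt (verit, ccfv_SIG) mult_left_mono right_diff_distrib)
    then show ?thesis using sig_low[OF Md] False by auto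
  qed
  have "\<bar>(\<Sum>l=1..k. sigmoid (M * y - M * b l)) - real i\<bar>
      = \<bar>\<Sum>l=1..k. sigmoid (M * y - M * b l) - (if l \<le> i then 1 else 0)\<bar>"
    by (simp add: ri sum_subtractf)
  also have "\<dots> \<le> (\<Sum>l=1..k. \<bar>sigmoid (M * y - M * b l) - (if l \<le> i then 1 else 0)\<bar>)"
    by (rule sum_abs)
  also have "\<dots> \<le> (\<Sum>l=1..k. 1 / (M * \<delta>))" by (rule sum_mono) (use tm in auto)
  finally show ?thesis by simp
qed

definition P :: "(nat \<Rightarrow> nat) \<Rightarrow> nat \<Rightarrow> nat" where "P k s = (\<Prod>r=1..s. k r)"
definition Q :: "nat \<Rightarrow> (nat \<Rightarrow> nat) \<Rightarrow> (nat \<Rightarrow> nat) \<Rightarrow> nat" where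
  "Q n k i = (\<Sum>s=1..n. (i s - 1) * P k (s - 1))"

lemma P_Suc: "P k (Suc s) = P k s * k (Suc s)"
  unfolding P_def by (simp add: prod.nat_ivl_Suc' mult.commute)

lemma P_dvd: "s \<le> n \<Longrightarrow> \<exists>R. P k n = P k s * R"
proof (induction n rule: dec_induct)
  case base then show ?case by (intro exI[of _ 1]) simp
next
  case (step n) then obtain R where "P k n = P k s * R" by blast
  then show ?case by (intro exI[of _ "R * k (Suc n)"]) (simp add: P_Suc)
qed

lemma multi_index_Suc: "multi_index (Suc n) k i \<Longrightarrow> multi_index n k i"
  unfolding multi_index_def by auto

lemma radix:
  "multi_index n k i \<Longrightarrow> Q n k i < P k n \<and> (\<forall>s\<in>{1..n}. (Q n k i div P k (s-1)) mod k s = i s - 1)"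
proof (induction n)
  case 0 then show ?case by (simp add: Q_def P_def)
next
  case (Suc n)
  have mi: "multi_index n k i" using Suc.prems by (rule multi_index_Suc)
  note IH = Suc.IH[OF mi]
  have ik: "1 \<le> i (Suc n)" "i (Suc n) \<le> k (Suc n)" using Suc.prems unfolding multi_index_def by auto
  define c where "c = i (Suc n) - 1"
  have c: "c < k (Suc n)" using ik unfolding c_def by auto
  have QS: "Q (Suc n) k i = Q n k i + c * P k n" unfolding Q_def c_def by simp
  have Ppos: "P k n > 0" using IH by auto
  have bound: "Q (Suc n) k i < P k (Suc n)"
  proof -
    have "Q n k i + c * P k n < P k n + c * P k n" using IH by simp
    also have "\<dots> = Suc c * P k n" by simp
    also have "\<dots> \<le> k (Suc n) * P k n" using c by (intro mult_right_mono) auto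
    finally show ?thesis by (simp add: QS P_Suc mult.commute)
  qed
  have digits: "(Q (Suc n) k i div P k (s-1)) mod k s = i s - 1" if s: "s \<in> {1..Suc n}" for s
  proof (cases "s = Suc n")
    case True
    have "Q (Suc n) k i div P k n = c" unfolding QS using IH Ppos
      by (simp add: div_add1_eq)
    then show ?thesis using True c by (simp add: c_def)
  next
    case False
    then have s': "s \<in> {1..n}" using s by auto
    obtain R where R: "P k n = P k s * R" using P_dvd[of s n k] s' by auto
    have Ps: "P k s = P k (s-1) * k s" using P_Suc[of k "s-1"] s' by simp
    have P0: "P k (s-1) > 0" using Ppos R Ps by (metis gr0I mult_0 mult_is_0)
    have "Q (Suc n) k i = Q n k i + (c * k s * R) * P k (s - 1)"
      unfolding QS R Ps by (simp add: ac_simps)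
    then have "Q (Suc n) k i div P k (s-1) = Q n k i div P k (s-1) + k s * (c * R)"
      using P0 div_mult_self1[of "P k (s-1)" "Q n k i" "c * k s * R"] by (simp add: ac_simps)
    then show ?thesis using IH s' by simp
  qed
  show ?case using bound digits by blast
qed

lemma tele_aux: "(\<Sum>t=1..Suc r. G (t - 1) - (if t = 1 then 0 else G (t - 2))) = (G r :: 'a::ab_group_add)"
proof (induction r)
  case 0 then show ?case by simp
next
  case (Suc r) then show ?case by (simp add: sum.cl_ivl_Suc)
qed

lemma tele:
  fixes G :: "nat \<Rightarrow> real ^ 'm::finite"
  assumes "r < K"
  shows "(\<Sum>t=1..K. (if t \<le> r+1 then 1 else 0::real) *\<^sub>R (G (t - 1) - (if t = 1 then 0 else G (t - 2)))) = G r"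
proof -
  have "(\<Sum>t=1..K. (if t \<le> r+1 then 1 else 0::real) *\<^sub>R (G (t - 1) - (if t = 1 then 0 else G (t - 2))))
     = (\<Sum>t\<in>{1..K} \<inter> {t. t \<le> r+1}. G (t - 1) - (if t = 1 then 0 else G (t - 2)))"
    by (subst sum.inter_restrict) (auto intro: sum.cong)
  also have "{1..K} \<inter> {t. t \<le> r+1} = {1..Suc r}" using assms by auto
  finally show ?thesis using tele_aux[of G r] by simp
qed

lemma pointwise:
  fixes a :: "nat \<Rightarrow> real ^ ('d::finite)" and b :: "nat \<Rightarrow> nat \<Rightarrow> real"
    and F :: "(nat \<Rightarrow> nat) \<Rightarrow> real ^ ('m::finite)"
  assumes mono: "\<forall>s\<in>{1..n}. \<forall>j\<in>{1..k s}. b s j < b s (j + 1)"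
    and d: "\<delta> > 0" and e: "\<epsilon> > 0"
    and Fres: "\<And>i i'. (\<forall>s\<in>{1..n}. i s = i' s) \<Longrightarrow> F i = F i'"
  shows "\<exists>U \<beta> v u \<gamma> W. \<forall>i x. multi_index n k i \<longrightarrow> x \<in> cell X n a b \<delta> i \<longrightarrow>
           (\<forall>j. \<bar>net n k U \<beta> v u \<gamma> W x $ j - F i $ j\<bar> \<le> \<epsilon>)"
proof -
  define dig where "dig s r = (r div P k (s-1)) mod k s + 1" for s r
  define G where "G r = F (\<lambda>s. dig s r)" for r
  define W where "W t = G (t - 1) - (if t = 1 then 0 else G (t - 2))" for t
  define K where "K = P k n"
  define C where "C = (\<Sum>s=1..n. real (P k (s-1)))"
  define E1 where "E1 = (\<Sum>s=1..n. real (P k (s-1)) * (real (k s) / \<delta>))"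
  define M where "M = 4 * E1 + 1"
  define S where "S = (\<Sum>t=1..K. norm (W t))"
  define T2 where "T2 = S / \<epsilon> + 1"
  define L where "L = 4 * T2"
  define U where "U s = M *\<^sub>R a s" for s
  define \<beta> where "\<beta> s l = M * b s l" for s l
  define v where "v s l = (1::real)" for s l :: nat
  define u where "u s = L * real (P k (s-1))" for s
  define \<gamma> where "\<gamma> t = L * (C + real t - 3/2)" for t :: nat
  have E1: "E1 \<ge> 0" unfolding E1_def using d by (intro sum_nonneg) auto
  have M: "M > 0" using E1 by (simp add: M_def)
  have S: "S \<ge> 0" unfolding S_def by (intro sum_nonneg) auto
  have T2: "T2 > 0" using S e unfolding T2_def by (smt (verit) divide_nonneg_pos)
  have L: "L > 0" using T2 by (simp add: L_def)
  have "\<forall>i x. multi_index n k i \<longrightarrow> x \<in> cell X n a b \<delta> i \<longrightarrow>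
           (\<forall>j. \<bar>net n k U \<beta> v u \<gamma> W x $ j - F i $ j\<bar> \<le> \<epsilon>)"
  proof (intro allI impI)
    fix i x j
    assume mi: "multi_index n k i" and xc: "x \<in> cell X n a b \<delta> i"
    have ik: "1 \<le> i s" "i s \<le> k s" if "s \<in> {1..n}" for s
      using mi that unfolding multi_index_def by auto
    define ps where "ps s = (\<Sum>l=1..k s. v s l * sigmoid (U s \<bullet> x - \<beta> s l))" for s
    have ps: "\<bar>ps s - real (i s)\<bar> \<le> real (k s) / (M * \<delta>)" if s: "s \<in> {1..n}" for s
    proof -
      have y: "b s (i s) + \<delta> < a s \<bullet> x" "a s \<bullet> x < b s (i s + 1) - \<delta>"
        using xc s unfolding cell_def by auto
      have "ps s = (\<Sum>l=1..k s. sigmoid (M * (a s \<bullet> x) - M * b s l))"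
        unfolding ps_def v_def U_def \<beta>_def by simp
      then show ?thesis using layer1[of "k s" "b s" "i s" \<delta> "a s \<bullet> x" M] mono s ik[OF s] y M d
        by auto
    qed
    define q0 where "q0 = (\<Sum>s=1..n. real (P k (s-1)) * ps s)"
    define r where "r = Q n k i"
    have rad: "r < K" "\<forall>s\<in>{1..n}. (r div P k (s-1)) mod k s = i s - 1"
      using radix[OF mi] unfolding r_def K_def by auto
    have rC: "real r + C = (\<Sum>s=1..n. real (P k (s-1)) * real (i s))"
    proof -
      have "real r + C = (\<Sum>s=1..n. real ((i s - 1) * P k (s - 1)) + real (P k (s-1)))"
        unfolding r_def Q_def C_def by (simp add: sum.distrib)
      also have "\<dots> = (\<Sum>s=1..n. real (P k (s-1)) * real (i s))"
      proof (rule sum.cong)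
        fix s assume s: "s \<in> {1..n}"
        have "real (i s - 1) = real (i s) - 1" using ik[OF s] by simp
        then show "real ((i s - 1) * P k (s - 1)) + real (P k (s-1)) = real (P k (s-1)) * real (i s)"
          by (simp add: algebra_simps)
      qed simp
      finally show ?thesis .
    qed
    have q0: "\<bar>q0 - (real r + C)\<bar> \<le> 1/4"
    proof -
      have "\<bar>q0 - (real r + C)\<bar> = \<bar>\<Sum>s=1..n. real (P k (s-1)) * (ps s - real (i s))\<bar>"
        unfolding q0_def rC by (simp add: sum_subtractf right_diff_distrib)
      also have "\<dots> \<le> (\<Sum>s=1..n. \<bar>real (P k (s-1)) * (ps s - real (i s))\<bar>)" by (rule sum_abs)
      also have "\<dots> \<le> (\<Sum>s=1..n. real (P k (s-1)) * (real (k s) / (M * \<delta>)))"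
      proof (rule sum_mono)
        fix s assume s: "s \<in> {1..n}"
        show "\<bar>real (P k (s-1)) * (ps s - real (i s))\<bar> \<le> real (P k (s-1)) * (real (k s) / (M * \<delta>))"
          unfolding abs_mult abs_of_nat using ps[OF s] by (rule mult_left_mono) simp
      qed
      also have "\<dots> = E1 / M" unfolding E1_def using M by (simp add: sum_divide_distrib field_simps)
      also have "\<dots> \<le> 1/4" using M E1 by (simp add: M_def field_simps)
      finally show ?thesis .
    qed
    have Gr: "G r = F i"
      unfolding G_def
    proof (rule Fres, intro ballI)
      fix s assume s: "s \<in> {1..n}"
      show "dig s r = i s" unfolding dig_def using rad(2) s ik[OF s] by auto
    qed
    define e where "e t = (if t \<le> r+1 then 1 else 0::real)" for t
    have netx: "net n k U \<beta> v u \<gamma> W x = (\<Sum>t=1..K. sigmoid (L * q0 - \<gamma> t) *\<^sub>R W t)"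
    proof -
      have "(\<Sum>s=1..n. u s * ps s) = L * q0"
        unfolding u_def q0_def by (simp add: sum_distrib_left ac_simps)
      then show ?thesis unfolding net_def Let_def K_def P_def ps_def[symmetric] by simp
    qed
    have sig: "\<bar>sigmoid (L * q0 - \<gamma> t) - e t\<bar> \<le> 1 / T2" if t: "t \<in> {1..K}" for t
    proof (cases "t \<le> r+1")
      case True
      have tt: "real t \<le> real r + 1" using True by simp
      have "q0 - (C + real t - 3/2) \<ge> 1/4" using q0 tt unfolding abs_le_iff by linarith
      then have "L * (q0 - (C + real t - 3/2)) \<ge> L * (1/4)" using L by (intro mult_left_mono) auto
      then have "L * q0 - \<gamma> t \<ge> T2" by (simp add: \<gamma>_def L_def right_diff_distrib)
      then show ?thesis using sig_high[OF T2] True by (simp add: e_def)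
    next
      case False
      have tt: "real t \<ge> real r + 2" using False by simp
      have "q0 - (C + real t - 3/2) \<le> - (1/4)" using q0 tt unfolding abs_le_iff by linarith
      then have "L * (q0 - (C + real t - 3/2)) \<le> L * (- (1/4))" using L by (intro mult_left_mono) auto
      then have "L * q0 - \<gamma> t \<le> - T2" by (simp add: \<gamma>_def L_def right_diff_distrib)
      then show ?thesis using sig_low[OF T2] False by (simp add: e_def)
    qed
    have Fi: "F i = (\<Sum>t=1..K. e t *\<^sub>R W t)"
      using tele[OF rad(1), of G] Gr unfolding e_def W_def by simp
    have "norm (net n k U \<beta> v u \<gamma> W x - F i) = norm (\<Sum>t=1..K. (sigmoid (L * q0 - \<gamma> t) - e t) *\<^sub>R W t)"
      unfolding netx Fi by (simp add: sum_subtractf scaleR_diff_left)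
    also have "\<dots> \<le> (\<Sum>t=1..K. norm ((sigmoid (L * q0 - \<gamma> t) - e t) *\<^sub>R W t))" by (rule norm_sum)
    also have "\<dots> \<le> (\<Sum>t=1..K. (1 / T2) * norm (W t))"
    proof (rule sum_mono)
      fix t assume t: "t \<in> {1..K}"
      show "norm ((sigmoid (L * q0 - \<gamma> t) - e t) *\<^sub>R W t) \<le> (1 / T2) * norm (W t)"
        unfolding norm_scaleR using sig[OF t] by (rule mult_right_mono) simp
    qed
    also have "\<dots> = S / T2" unfolding S_def by (simp add: sum_divide_distrib)
    also have "\<dots> \<le> \<epsilon>" using T2 S e by (simp add: T2_def field_simps)
    finally have "norm (net n k U \<beta> v u \<gamma> W x - F i) \<le> \<epsilon>" .
    then show "\<bar>net n k U \<beta> v u \<gamma> W x $ j - F i $ j\<bar> \<le> \<epsilon>"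
      using component_le_norm_cart[of "net n k U \<beta> v u \<gamma> W x - F i" j] by simp
  qed
  then show ?thesis by blast
qed

theorem theorem2:
  fixes D :: "((real ^ ('d::finite)) \<times> nat) measure"
    and X :: "(real ^ 'd) set"
    and c n :: nat and k :: "nat \<Rightarrow> nat" and \<delta> \<epsilon> :: real
    and f :: "nat \<Rightarrow> real ^ ('m::finite)"
  assumes "prob_space D"
    and "AE z in D. fst z \<in> X \<and> snd z \<in> {1..c}"
    and "separable D X c n k \<delta>"
    and "inj_on f {1..c}"
    and "\<epsilon> > 0"
  shows "\<exists>U \<beta> v u \<gamma> W. AE z in D.
           (\<forall>j. \<bar>net n k U \<beta> v u \<gamma> W (fst z) $ j - f (snd z) $ j\<bar> \<le> \<epsilon>)"
proof -
  from assms(3) obtain a b where d: "\<delta> > 0"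
    and mono: "\<forall>s\<in>{1..n}. \<forall>j\<in>{1..k s}. b s j < b s (j + 1)"
    and lab: "\<forall>i. multi_index n k i \<longrightarrow>
          (\<exists>yi\<in>{1..c}. AE z in D. fst z \<in> cell X n a b \<delta> i \<longrightarrow> snd z = yi)"
    and cov: "AE z in D. \<exists>i. multi_index n k i \<and> fst z \<in> cell X n a b \<delta> i"
    unfolding separable_def by blast
  define I where "I = PiE {1..n} (\<lambda>s. {1..k s})"
  have fI: "finite I" unfolding I_def by (intro finite_PiE) auto
  have miI: "multi_index n k i" if "i \<in> I" for i
    using that unfolding I_def multi_index_def by auto
  have "\<forall>i\<in>I. \<exists>y. AE z in D. fst z \<in> cell X n a b \<delta> i \<longrightarrow> snd z = y"
    using lab miI by blast
  then obtain Y where Y0: "\<forall>i\<in>I. AE z in D. fst z \<in> cell X n a b \<delta> i \<longrightarrow> snd z = Y i"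
    using bchoice[OF \<open>\<forall>i\<in>I. \<exists>y. _\<close>] by blast
  then have Y: "\<And>i. i \<in> I \<Longrightarrow> AE z in D. fst z \<in> cell X n a b \<delta> i \<longrightarrow> snd z = Y i"
    by blast
  have AY: "AE z in D. \<forall>i\<in>I. fst z \<in> cell X n a b \<delta> i \<longrightarrow> snd z = Y i"
    using Y fI by (intro AE_finite_allI) auto
  define F where "F i = f (Y (restrict i {1..n}))" for i
  have Fres: "F i = F i'" if "\<forall>s\<in>{1..n}. i s = i' s" for i i'
  proof -
    have "restrict i {1..n} = restrict i' {1..n}" using that by (auto simp: restrict_def)
    then show ?thesis by (simp add: F_def)
  qed
  obtain U \<beta> v u \<gamma> W where P: "\<forall>i x. multi_index n k i \<longrightarrow> x \<in> cell X n a b \<delta> i \<longrightarrow>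
           (\<forall>j. \<bar>net n k U \<beta> v u \<gamma> W x $ j - F i $ j\<bar> \<le> \<epsilon>)"
  proof -
    have "\<exists>U \<beta> v u \<gamma> W. \<forall>i x. multi_index n k i \<longrightarrow> x \<in> cell X n a b \<delta> i \<longrightarrow>
           (\<forall>j. \<bar>net n k U \<beta> v u \<gamma> W x $ j - F i $ j\<bar> \<le> \<epsilon>)"
      by (rule pointwise[OF mono d assms(5)]) (rule Fres, blast)
    then show ?thesis using that by blast
  qed
  have "AE z in D. (\<forall>j. \<bar>net n k U \<beta> v u \<gamma> W (fst z) $ j - f (snd z) $ j\<bar> \<le> \<epsilon>)"
    using AY cov
  proof eventually_elim
    case (elim z)
    then obtain i where mi: "multi_index n k i" and xc: "fst z \<in> cell X n a b \<delta> i" by blast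
    define i' where "i' = restrict i {1..n}"
    have i'I: "i' \<in> I" using mi unfolding i'_def I_def multi_index_def by auto
    have "cell X n a b \<delta> i' = cell X n a b \<delta> i" unfolding cell_def i'_def by auto
    then have "snd z = Y i'" using elim i'I xc by auto
    then have "F i = f (snd z)" by (simp add: F_def i'_def)
    moreover have "\<forall>j. \<bar>net n k U \<beta> v u \<gamma> W (fst z) $ j - F i $ j\<bar> \<le> \<epsilon>"
      using P mi xc by blast
    ultimately show ?case by simp
  qed
  then show ?thesis by blast
qed

end
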